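(* Let $0<m<L$, $\alpha>0$, $\rho\ge\rho_\mathrm{GD}:=\max(1-\alpha m,\ \alpha L-1)$ and $\gamma\in[0,\rho^2]$. Let $A=I$, $B=-\alpha I$, $C=I$ (all $n\times n$). Then there exists $\varepsilon\in[0,1]$ such that the matrix \[ \begin{bmatrix} A + \big((1-\varepsilon)m+\varepsilon L\big)BC & -\varepsilon\gamma B\\ (1-\varepsilon)(L-m)C & \varepsilon\gamma I\end{bmatrix} \] is $\rho$-Schur.
   Context: A square matrix is $\rho$-Schur if all its eigenvalues lie in the open disk of radius $\rho$. *)

theory Defs
  imports "Jordan_Normal_Form.Char_Poly"
begin

definition rho_Schur :: "real \<Rightarrow> real mat \<Rightarrow> bool" where
  "rho_Schur \<rho> M \<longleftrightarrow> dim_row M = dim_col M \<and>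
     (\<forall>k. eigenvalue (map_mat complex_of_real M) k \<longrightarrow> cmod k < \<rho>)"

end

theory Submission
  imports Defs
begin

lemma block_eig:
  fixes a b c d :: real and k :: complex
  assumes "eigenvalue (map_mat complex_of_real (four_block_mat (a \<cdot>\<^sub>m 1\<^sub>m n) (b \<cdot>\<^sub>m 1\<^sub>m n) (c \<cdot>\<^sub>m 1\<^sub>m n) (d \<cdot>\<^sub>m 1\<^sub>m n))) k"
  shows "(k - of_real a) * (k - of_real d) = of_real b * of_real c"
proof -
  let ?f = "\<lambda>r::real. (of_real r :: complex) \<cdot>\<^sub>m (1\<^sub>m n :: complex mat)"
  have mf: "map_mat complex_of_real (r \<cdot>\<^sub>m 1\<^sub>m n) = ?f r" for r
    by (rule eq_matI) auto
  have "map_mat complex_of_real (four_block_mat (a \<cdot>\<^sub>m 1\<^sub>m n) (b \<cdot>\<^sub>m 1\<^sub>m n) (c \<cdot>\<^sub>m 1\<^sub>m n) (d \<cdot>\<^sub>m 1\<^sub>m n))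
     = four_block_mat (?f a) (?f b) (?f c) (?f d)"
    by (subst map_four_block_mat[of _ n n _ n _ n]) (auto simp: mf)
  with assms obtain v where v: "v \<in> carrier_vec (n+n)" "v \<noteq> 0\<^sub>v (n+n)"
     "four_block_mat (?f a) (?f b) (?f c) (?f d) *\<^sub>v v = k \<cdot>\<^sub>v v"
    unfolding eigenvalue_def eigenvector_def by auto
  define x where "x = vec_first v n"
  define y where "y = vec_last v n"
  have vxy: "v = x @\<^sub>v y" using v(1) unfolding x_def y_def by (metis vec_first_last_append)
  have x: "x \<in> carrier_vec n" and y: "y \<in> carrier_vec n" unfolding x_def y_def by auto
  have eq: "(?f a *\<^sub>v x + ?f b *\<^sub>v y) @\<^sub>v (?f c *\<^sub>v x + ?f d *\<^sub>v y) = k \<cdot>\<^sub>v (x @\<^sub>v y)"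
    using v(3) unfolding vxy by (subst (asm) four_block_mat_mult_vec[OF _ _ _ _ x y]) auto
  have e1: "of_real a * x $ i + of_real b * y $ i = k * x $ i" if "i < n" for i
  proof -
    have "((?f a *\<^sub>v x + ?f b *\<^sub>v y) @\<^sub>v (?f c *\<^sub>v x + ?f d *\<^sub>v y)) $ i = (k \<cdot>\<^sub>v (x @\<^sub>v y)) $ i"
      using eq by simp
    thus ?thesis using that x y by simp
  qed
  have e2: "of_real c * x $ i + of_real d * y $ i = k * y $ i" if "i < n" for i
  proof -
    have "((?f a *\<^sub>v x + ?f b *\<^sub>v y) @\<^sub>v (?f c *\<^sub>v x + ?f d *\<^sub>v y)) $ (n+i) = (k \<cdot>\<^sub>v (x @\<^sub>v y)) $ (n+i)"
      using eq by simp
    thus ?thesis using that x y by simp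
  qed
  obtain i where i: "i < n" "x $ i \<noteq> 0 \<or> y $ i \<noteq> 0"
  proof -
    have "\<exists>i<n. x $ i \<noteq> 0 \<or> y $ i \<noteq> 0"
    proof (rule ccontr)
      assume "\<not> ?thesis"
      hence "x = 0\<^sub>v n" "y = 0\<^sub>v n" using x y by (auto intro!: eq_vecI)
      hence "v = 0\<^sub>v (n+n)" unfolding vxy by (auto intro!: eq_vecI)
      with v(2) show False by simp
    qed
    thus ?thesis using that by blast
  qed
  have h1: "(k - of_real a) * x $ i = of_real b * y $ i" using e1[OF i(1)] by (simp add: algebra_simps)
  have h2: "(k - of_real d) * y $ i = of_real c * x $ i" using e2[OF i(1)] by (simp add: algebra_simps)
  have "((k - of_real a) * (k - of_real d) - of_real b * of_real c) * x $ i
     = (k - of_real d) * ((k - of_real a) * x $ i) - of_real b * (of_real c * x $ i)"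
    by (simp add: algebra_simps)
  also have "\<dots> = (k - of_real d) * (of_real b * y $ i) - of_real b * ((k - of_real d) * y $ i)"
    using h1 h2 by simp
  also have "\<dots> = 0" by (simp add: algebra_simps)
  finally have "((k - of_real a) * (k - of_real d) - of_real b * of_real c) * x $ i = 0" .
  moreover have "((k - of_real a) * (k - of_real d) - of_real b * of_real c) * y $ i
     = (k - of_real a) * ((k - of_real d) * y $ i) - of_real c * (of_real b * y $ i)"
    by (simp add: algebra_simps)
  moreover have "\<dots> = (k - of_real a) * (of_real c * x $ i) - of_real c * ((k - of_real a) * x $ i)"
    using h1 h2 by simp
  moreover have "\<dots> = 0" by (simp add: algebra_simps)
  ultimately show ?thesis using i(2) by auto
qed


lemma quad_bound:
  fixes k :: complex and g \<rho> :: real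
  assumes g: "0 \<le> g" "g < \<rho>" and eq: "k * (k - of_real (g/2)) = of_real (g*\<rho>/2)"
  shows "cmod k < \<rho>"
proof -
  define u where "u = Re k"
  define w where "w = Im k"
  have k: "k = Complex u w" unfolding u_def w_def by simp
  have re: "u*u - w*w - (g/2)*u = g*\<rho>/2" and im: "2*u*w - (g/2)*w = 0"
    using arg_cong[OF eq, of Re] arg_cong[OF eq, of Im] unfolding k
    by (simp_all add: algebra_simps)
  have w0: "w = 0"
  proof (rule ccontr)
    assume "w \<noteq> 0"
    hence "2*u - g/2 = 0" using im by (metis mult.commute mult_eq_0_iff right_diff_distrib)
    hence "u = g/4" by simp
    hence gu: "g = 4*u" by simp
    have "u*u - (g/2)*u = -(g*g/16)" unfolding gu by (simp add: algebra_simps)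
    hence "- (g*g/16) - w*w = g*\<rho>/2" using re by linarith
    moreover have "w*w > 0" using \<open>w \<noteq> 0\<close> by (metis not_real_square_gt_zero)
    moreover have "g*g \<ge> 0" "g*\<rho> \<ge> 0" using g by auto
    ultimately show False by linarith
  qed
  have re2: "u*u = (g/2)*(u + \<rho>)" using re w0 by (simp add: algebra_simps)
  have "\<bar>u\<bar> < \<rho>"
  proof (rule ccontr)
    assume "\<not> \<bar>u\<bar> < \<rho>"
    hence "u \<ge> \<rho> \<or> u \<le> -\<rho>" by auto
    thus False
    proof
      assume u: "u \<ge> \<rho>"
      have "(g/2)*(u+\<rho>) \<le> (g/2)*(2*u)" using u g by (intro mult_left_mono) auto
      also have "\<dots> = g*u" by simp
      also have "\<dots> < \<rho>*u" using u g by (intro mult_strict_right_mono) auto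
      also have "\<dots> \<le> u*u" using u g by (intro mult_right_mono) auto
      finally show False using re2 by simp
    next
      assume u: "u \<le> -\<rho>"
      have "(g/2)*(u+\<rho>) \<le> 0" using u g by (intro mult_nonneg_nonpos) auto
      moreover have "u < 0" using u g by linarith
      hence "u*u > 0" by (simp add: mult_neg_neg)
      ultimately show False using re2 by simp
    qed
  qed
  thus ?thesis unfolding k w0 by (simp add: cmod_def)
qed

theorem lemma2p10:
  fixes m L \<alpha> \<rho> \<gamma> :: real and n :: nat and A B C :: "real mat"
  assumes "0 < m" and "m < L" and "\<alpha> > 0"
    and "\<rho> \<ge> max (1 - \<alpha> * m) (\<alpha> * L - 1)"
    and "0 \<le> \<gamma>" and "\<gamma> \<le> \<rho>\<^sup>2"
    and "A = 1\<^sub>m n" and "B = (- \<alpha>) \<cdot>\<^sub>m 1\<^sub>m n" and "C = 1\<^sub>m n"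
  shows "\<exists>\<epsilon>::real. 0 \<le> \<epsilon> \<and> \<epsilon> \<le> 1 \<and>
    rho_Schur \<rho>
      (four_block_mat
        (A + ((1 - \<epsilon>) * m + \<epsilon> * L) \<cdot>\<^sub>m (B * C))
        ((- (\<epsilon> * \<gamma>)) \<cdot>\<^sub>m B)
        (((1 - \<epsilon>) * (L - m)) \<cdot>\<^sub>m C)
        ((\<epsilon> * \<gamma>) \<cdot>\<^sub>m 1\<^sub>m n))"
proof -
  have \<rho>pos: "\<rho> > 0" using assms(2,3,4)
  proof -
    have "\<alpha>*m < \<alpha>*L" using assms(2,3) by simp
    thus ?thesis using assms(4) by linarith
  qed
  have main: "rho_Schur \<rho>
      (four_block_mat
        (A + ((1 - \<epsilon>) * m + \<epsilon> * L) \<cdot>\<^sub>m (B * C))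
        ((- (\<epsilon> * \<gamma>)) \<cdot>\<^sub>m B)
        (((1 - \<epsilon>) * (L - m)) \<cdot>\<^sub>m C)
        ((\<epsilon> * \<gamma>) \<cdot>\<^sub>m 1\<^sub>m n))"
    if H: "\<And>k::complex. (k - of_real (1 - ((1 - \<epsilon>) * m + \<epsilon> * L)*\<alpha>)) * (k - of_real (\<epsilon> * \<gamma>))
              = of_real (\<epsilon>*\<gamma>*\<alpha>) * of_real ((1 - \<epsilon>) * (L - m)) \<Longrightarrow> cmod k < \<rho>"
    for \<epsilon>
  proof -
    define s where "s = (1 - \<epsilon>) * m + \<epsilon> * L"
    have M: "four_block_mat
        (A + s \<cdot>\<^sub>m (B * C))
        ((- (\<epsilon> * \<gamma>)) \<cdot>\<^sub>m B)
        (((1 - \<epsilon>) * (L - m)) \<cdot>\<^sub>m C)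
        ((\<epsilon> * \<gamma>) \<cdot>\<^sub>m 1\<^sub>m n) =
      four_block_mat ((1 - s*\<alpha>) \<cdot>\<^sub>m 1\<^sub>m n) ((\<epsilon>*\<gamma>*\<alpha>) \<cdot>\<^sub>m 1\<^sub>m n)
         (((1 - \<epsilon>) * (L - m)) \<cdot>\<^sub>m 1\<^sub>m n) ((\<epsilon> * \<gamma>) \<cdot>\<^sub>m 1\<^sub>m n)"
    proof (rule cong_four_block_mat)
      show "A + s \<cdot>\<^sub>m (B * C) = (1 - s*\<alpha>) \<cdot>\<^sub>m 1\<^sub>m n"
        unfolding assms(7-9) by (rule eq_matI) (auto simp: algebra_simps)
      show "(- (\<epsilon> * \<gamma>)) \<cdot>\<^sub>m B = (\<epsilon>*\<gamma>*\<alpha>) \<cdot>\<^sub>m 1\<^sub>m n"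
        unfolding assms(8) by (rule eq_matI) auto
    qed (auto simp: assms(9))
    show ?thesis unfolding s_def[symmetric] M rho_Schur_def
      using H block_eig unfolding s_def by fastforce
  qed
  show ?thesis
  proof (cases "\<bar>1 - \<alpha>*m\<bar> < \<rho>")
    case True
    have "rho_Schur \<rho>
      (four_block_mat
        (A + ((1 - 0) * m + 0 * L) \<cdot>\<^sub>m (B * C))
        ((- (0 * \<gamma>)) \<cdot>\<^sub>m B)
        (((1 - 0) * (L - m)) \<cdot>\<^sub>m C)
        ((0 * \<gamma>) \<cdot>\<^sub>m 1\<^sub>m n))"
    proof (rule main)
      fix k :: complex
      assume "(k - of_real (1 - ((1 - 0) * m + 0 * L)*\<alpha>)) * (k - of_real (0 * \<gamma>))
              = of_real (0*\<gamma>*\<alpha>) * of_real ((1 - 0) * (L - m))"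
      hence "k = of_real (1 - \<alpha>*m) \<or> k = 0" by (simp add: ac_simps)
      thus "cmod k < \<rho>"
      proof
        assume "k = of_real (1 - \<alpha>*m)"
        hence "cmod k = \<bar>1 - \<alpha>*m\<bar>" by (simp only: norm_of_real)
        thus ?thesis using True by simp
      qed (use \<rho>pos in simp)
    qed
    thus ?thesis by (intro exI[of _ 0]) simp
  next
    case False
    have "\<alpha>*m < \<alpha>*L" using assms(2,3) by simp
    hence r: "\<rho> = 1 - \<alpha>*m" using False assms(4) by auto
    have "\<alpha>*m > 0" using assms(1,3) by simp
    hence r1: "\<rho> < 1" using r by simp
    have g: "\<gamma> < \<rho>"
    proof -
      have "\<rho>\<^sup>2 < \<rho>" using r1 \<rho>pos by (simp add: power2_eq_square)
      thus ?thesis using assms(6) by simp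
    qed
    show ?thesis
    proof (cases "\<alpha>*L - 1 < \<rho>")
      case True
      have "rho_Schur \<rho>
      (four_block_mat
        (A + ((1 - 1) * m + 1 * L) \<cdot>\<^sub>m (B * C))
        ((- (1 * \<gamma>)) \<cdot>\<^sub>m B)
        (((1 - 1) * (L - m)) \<cdot>\<^sub>m C)
        ((1 * \<gamma>) \<cdot>\<^sub>m 1\<^sub>m n))"
      proof (rule main)
        fix k :: complex
        assume "(k - of_real (1 - ((1 - 1) * m + 1 * L)*\<alpha>)) * (k - of_real (1 * \<gamma>))
              = of_real (1*\<gamma>*\<alpha>) * of_real ((1 - 1) * (L - m))"
        hence "k = of_real (1 - \<alpha>*L) \<or> k = of_real \<gamma>" by (simp add: ac_simps)
        moreover have "\<bar>1 - \<alpha>*L\<bar> < \<rho>" using True r \<open>\<alpha>*m < \<alpha>*L\<close> by auto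
        ultimately show "cmod k < \<rho>" using g assms(5) by (auto simp only: norm_of_real)
      qed
      thus ?thesis by (intro exI[of _ 1]) simp
    next
      case False
      hence r2: "\<rho> = \<alpha>*L - 1" using assms(4) by auto
      have "rho_Schur \<rho>
      (four_block_mat
        (A + ((1 - 1/2) * m + 1/2 * L) \<cdot>\<^sub>m (B * C))
        ((- (1/2 * \<gamma>)) \<cdot>\<^sub>m B)
        (((1 - 1/2) * (L - m)) \<cdot>\<^sub>m C)
        ((1/2 * \<gamma>) \<cdot>\<^sub>m 1\<^sub>m n))"
      proof (rule main)
        fix k :: complex
        assume a: "(k - of_real (1 - ((1 - 1/2) * m + 1/2 * L)*\<alpha>)) * (k - of_real (1/2 * \<gamma>))
              = of_real (1/2*\<gamma>*\<alpha>) * of_real ((1 - 1/2) * (L - m))"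
        have e1: "1 - ((1 - 1/2) * m + 1/2 * L)*\<alpha> = 0" using r r2 by (simp add: algebra_simps)
        have e2: "(1/2*\<gamma>*\<alpha>) * ((1 - 1/2) * (L - m)) = \<gamma>*\<rho>/2"
        proof -
          have "\<alpha>*(L-m) = 2*\<rho>" using r r2 by (simp add: algebra_simps)
          have "(1/2*\<gamma>*\<alpha>) * ((1 - 1/2) * (L - m)) = \<gamma>*(\<alpha>*(L-m))/4" by (simp add: algebra_simps)
          thus ?thesis using \<open>\<alpha>*(L-m) = 2*\<rho>\<close> by simp
        qed
        have "k * (k - of_real (\<gamma>/2)) = of_real (\<gamma>*\<rho>/2)"
          using a unfolding e1 of_real_mult[symmetric] e2 by (simp add: mult.commute)
        thus "cmod k < \<rho>" using quad_bound assms(5) g by blast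
      qed
      thus ?thesis by (intro exI[of _ "1/2"]) simp
    qed
  qed
qed

end
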